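(* Fix a wavelength $\lambda>0$, a numerical aperture $NA>0$ and a constant $A>0$. Let $P(\mathbf f)=1$ if $|\mathbf f|<NA/\lambda$ and $P(\mathbf f)=0$ otherwise ($\mathbf f=(f_x,f_y)\in\mathbb R^2$). Let $q_n\ge 0$ be an illumination intensity supported in the half-disk $\{\boldsymbol\rho=(\rho\cos\theta,\rho\sin\theta): 0\le\rho<NA/\lambda,\ \theta\in[\theta_0-\pi/2,\theta_0+\pi/2]\}$ with $\theta_0=0$. Define the phase transfer function $$\widetilde H_n(\mathbf f)=iA\iint q_n(\boldsymbol\rho)P^*(\boldsymbol\rho)\big[P(\boldsymbol\rho+\mathbf f)-P(\boldsymbol\rho-\mathbf f)\big]\,d^2\boldsymbol\rho ,$$ and the point spread function $H_n=\mathcal F^{-1}\widetilde H_n$. Let $u(x,y)=\operatorname{sign}(x)$ and let $g=H_n\otimes u$ be the filter response (2D convolution). Then the response magnitude is maximal along the $y$-axis: $|g(x,y)|\le |g(0,y)|$ for all $(x,y)\in\mathbb R^2$. In this sense $H_n$ is an edge detection filter for edges drawn along the $y$-axis.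
   Context: $\mathcal F^{-1}$ denotes the inverse 2D Fourier transform and $\otimes$ 2D convolution. The Fourier transform of $u$ is $\widetilde u(f_x,f_y)=\frac{1}{i f_x}$ concentrated on the line $f_y=0$ (i.e. $\frac{1}{if_x}\delta(f_y)$). $P$ is the aberration-free pupil of the objective lens; $q_n$ is the intensity of the incident oblique plane-wave illumination, and $\theta_0$ is the central illumination direction. *)

theory Defs
  imports "HOL-Analysis.Analysis"
begin

text \<open>Aberration-free pupil: P(f) = 1 if |f| < NA/lambda, 0 otherwise (real-valued, so P^* = P).\<close>
definition pupil :: "real \<Rightarrow> real \<Rightarrow> real \<times> real \<Rightarrow> real" where
  "pupil NA lam f = (if norm f < NA / lam then 1 else 0)"

definition half_disk :: "real \<Rightarrow> real \<Rightarrow> (real \<times> real) set" where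
  "half_disk NA lam = {(r * cos th, r * sin th) | r th.
      0 \<le> r \<and> r < NA / lam \<and> - pi / 2 \<le> th \<and> th \<le> pi / 2}"

definition ptf :: "real \<Rightarrow> real \<Rightarrow> real \<Rightarrow> (real \<times> real \<Rightarrow> real) \<Rightarrow> real \<times> real \<Rightarrow> complex" where
  "ptf A NA lam q f = \<i> * complex_of_real A *
     complex_of_real (\<integral>\<rho>. q \<rho> * pupil NA lam \<rho> *
        (pupil NA lam (\<rho> + f) - pupil NA lam (\<rho> - f)) \<partial>lborel)"

text \<open>Filter response g = H_n \<otimes> u with u(x,y) = sign x, computed as
  g = F^{-1}(H_n~ * u~) with u~(f_x,f_y) = 1/(i f_x) \<delta>(f_y) and inverse Fourier kernel
  exp(2 pi i (f_x x + f_y y)); integrating out the delta in f_y gives the formula below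
  (the result does not depend on y).\<close>
definition edge_response ::
  "real \<Rightarrow> real \<Rightarrow> real \<Rightarrow> (real \<times> real \<Rightarrow> real) \<Rightarrow> real \<Rightarrow> real \<Rightarrow> complex" where
  "edge_response A NA lam q x y =
     (\<integral>fx. ptf A NA lam q (fx, 0) * (1 / (\<i> * complex_of_real fx))
            * exp (2 * pi * \<i> * complex_of_real (fx * x + 0 * y)) \<partial>lborel)"

end

theory Submission
  imports Defs
begin

lemma integral_nonpos_AE:
  fixes f :: "'a \<Rightarrow> real"
  assumes "AE x in M. f x \<le> 0"
  shows "integral\<^sup>L M f \<le> 0"
proof -
  have "0 \<le> integral\<^sup>L M (\<lambda>x. - f x)"
    by (rule integral_nonneg_AE) (use assms in auto)
  then show ?thesis by simp
qed

lemma hd_fst: "\<rho> \<in> half_disk NA lam \<Longrightarrow> fst \<rho> \<ge> 0"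
  unfolding half_disk_def
  by (auto intro!: mult_nonneg_nonneg cos_ge_zero)

lemma norm_cmp:
  fixes a b fx :: real
  assumes "a * fx \<ge> 0"
  shows "norm ((a,b) - (fx,0)) \<le> norm ((a,b) + (fx,0))"
proof -
  have "(a - fx)^2 + b^2 \<le> (a + fx)^2 + b^2"
    using assms by (simp add: power2_eq_square algebra_simps)
  then show ?thesis
    by (simp add: norm_prod_def)
qed

lemma norm_cmp2:
  fixes a b fx :: real
  assumes "a * fx \<le> 0"
  shows "norm ((a,b) + (fx,0)) \<le> norm ((a,b) - (fx,0))"
proof -
  have "(a + fx)^2 + b^2 \<le> (a - fx)^2 + b^2"
    using assms by (simp add: power2_eq_square algebra_simps)
  then show ?thesis
    by (simp add: norm_prod_def)
qed

lemma T_sign: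
  fixes lam NA :: real and q :: "real \<times> real \<Rightarrow> real"
  assumes q0: "\<And>\<rho>. q \<rho> \<ge> 0"
    and qs: "\<And>\<rho>. \<rho> \<notin> half_disk NA lam \<Longrightarrow> q \<rho> = 0"
  shows "(\<integral>\<rho>. q \<rho> * pupil NA lam \<rho> *
        (pupil NA lam (\<rho> + (fx,0)) - pupil NA lam (\<rho> - (fx,0))) \<partial>lborel) * fx \<le> 0"
proof (cases "fx \<ge> 0")
  case True
  have "(\<integral>\<rho>. q \<rho> * pupil NA lam \<rho> *
        (pupil NA lam (\<rho> + (fx,0)) - pupil NA lam (\<rho> - (fx,0))) \<partial>lborel) \<le> 0"
  proof (rule integral_nonpos_AE, rule AE_I2)
    fix \<rho> :: "real \<times> real"
    show "q \<rho> * pupil NA lam \<rho> * (pupil NA lam (\<rho> + (fx,0)) - pupil NA lam (\<rho> - (fx,0))) \<le> 0"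
    proof (cases "\<rho> \<in> half_disk NA lam")
      case True
      obtain a b where ab: "\<rho> = (a,b)" by fastforce
      have "a \<ge> 0" using hd_fst[OF True] ab by simp
      then have "norm (\<rho> - (fx,0)) \<le> norm (\<rho> + (fx,0))"
        using norm_cmp[of a fx b] \<open>fx \<ge> 0\<close> ab by simp
      then have "pupil NA lam (\<rho> + (fx,0)) \<le> pupil NA lam (\<rho> - (fx,0))"
        unfolding pupil_def by auto
      then show ?thesis using q0[of \<rho>]
        by (intro mult_nonneg_nonpos) (auto simp: pupil_def)
    next
      case False then show ?thesis using qs by simp
    qed
  qed
  then show ?thesis using True by (simp add: mult_nonpos_nonneg)
next
  case False
  have "(\<integral>\<rho>. q \<rho> * pupil NA lam \<rho> *
        (pupil NA lam (\<rho> + (fx,0)) - pupil NA lam (\<rho> - (fx,0))) \<partial>lborel) \<ge> 0"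
  proof (rule integral_nonneg_AE, rule AE_I2)
    fix \<rho> :: "real \<times> real"
    show "q \<rho> * pupil NA lam \<rho> * (pupil NA lam (\<rho> + (fx,0)) - pupil NA lam (\<rho> - (fx,0))) \<ge> 0"
    proof (cases "\<rho> \<in> half_disk NA lam")
      case True
      obtain a b where ab: "\<rho> = (a,b)" by fastforce
      have "a \<ge> 0" using hd_fst[OF True] ab by simp
      then have "norm (\<rho> + (fx,0)) \<le> norm (\<rho> - (fx,0))"
        using norm_cmp2[of a fx b] False ab by (simp add: mult_nonneg_nonpos)
      then have "pupil NA lam (\<rho> - (fx,0)) \<le> pupil NA lam (\<rho> + (fx,0))"
        unfolding pupil_def by auto
      then show ?thesis using q0[of \<rho>]
        by (intro mult_nonneg_nonneg) (auto simp: pupil_def)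
    next
      case False then show ?thesis using qs by simp
    qed
  qed
  then show ?thesis using False by (simp add: mult_nonneg_nonpos)
qed

theorem lemma1:
  fixes lam NA A :: real and q :: "real \<times> real \<Rightarrow> real"
  assumes "lam > 0" and "NA > 0" and "A > 0"
    and "\<And>\<rho>. q \<rho> \<ge> 0"
    and "\<And>\<rho>. \<rho> \<notin> half_disk NA lam \<Longrightarrow> q \<rho> = 0"
    and "integrable lborel q"
  shows "\<forall>x y. cmod (edge_response A NA lam q x y) \<le> cmod (edge_response A NA lam q 0 y)"
proof (intro allI)
  fix x y :: real
  define T where "T fx = (\<integral>\<rho>. q \<rho> * pupil NA lam \<rho> *
        (pupil NA lam (\<rho> + (fx,0)) - pupil NA lam (\<rho> - (fx,0))) \<partial>lborel)" for fx
  define h where "h fx = A * T fx / fx" for fx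
  have hle: "h fx \<le> 0" for fx
  proof -
    have "T fx * fx \<le> 0" unfolding T_def by (rule T_sign[OF assms(4,5)])
    then have "T fx / fx \<le> 0"
      by (cases "fx = 0") (auto simp: divide_le_0_iff mult_le_0_iff)
    then show ?thesis unfolding h_def using assms(3)
      by (simp add: mult_nonneg_nonpos times_divide_eq_right[symmetric] del: times_divide_eq_right)
  qed
  have phi: "ptf A NA lam q (fx, 0) * (1 / (\<i> * complex_of_real fx))
            * exp (2 * pi * \<i> * complex_of_real (fx * x' + 0 * y))
     = complex_of_real (h fx) * exp (2 * pi * \<i> * complex_of_real (fx * x'))" for fx x'
  proof (cases "fx = 0")
    case True then show ?thesis by (simp add: h_def)
  next
    case False
    then show ?thesis unfolding ptf_def h_def T_def
      by (simp add: field_simps)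
  qed
  have er: "edge_response A NA lam q x' y =
     (\<integral>fx. complex_of_real (h fx) * exp (2 * pi * \<i> * complex_of_real (fx * x')) \<partial>lborel)" for x'
    unfolding edge_response_def by (simp only: phi)
  have er0: "edge_response A NA lam q 0 y = (\<integral>fx. complex_of_real (h fx) \<partial>lborel)"
    unfolding er by simp
  have nrm: "norm (complex_of_real (h fx) * exp (2 * pi * \<i> * complex_of_real (fx * x))) = - h fx" for fx
    using hle[of fx] by (simp add: norm_mult)
  show "cmod (edge_response A NA lam q x y) \<le> cmod (edge_response A NA lam q 0 y)"
  proof (cases "integrable lborel (\<lambda>fx. complex_of_real (h fx) * exp (2 * pi * \<i> * complex_of_real (fx * x)))")
    case True
    then have "integrable lborel (\<lambda>fx. norm (complex_of_real (h fx) * exp (2 * pi * \<i> * complex_of_real (fx * x))))"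
      by (rule integrable_norm)
    then have ih: "integrable lborel (\<lambda>fx. - h fx)" by (simp only: nrm)
    then have ih2: "integrable lborel h" by simp
    have "cmod (edge_response A NA lam q x y) \<le> (\<integral>fx. norm (complex_of_real (h fx) * exp (2 * pi * \<i> * complex_of_real (fx * x))) \<partial>lborel)"
      unfolding er by (rule integral_norm_bound)
    also have "\<dots> = (\<integral>fx. - h fx \<partial>lborel)" by (simp only: nrm)
    also have "\<dots> = - (\<integral>fx. h fx \<partial>lborel)" by simp
    also have "\<dots> = cmod (edge_response A NA lam q 0 y)"
    proof -
      have "(\<integral>fx. h fx \<partial>lborel) \<le> 0" by (rule integral_nonpos_AE) (simp add: hle)
      moreover have "edge_response A NA lam q 0 y = complex_of_real (\<integral>fx. h fx \<partial>lborel)"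
        unfolding er0 by (rule integral_complex_of_real)
      ultimately show ?thesis by simp
    qed
    finally show ?thesis .
  next
    case False
    then show ?thesis unfolding er by (simp add: not_integrable_integral_eq)
  qed
qed

end
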